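(* In the multivariate LISO setting with $\sum_iY_i=0$ and, for each $k$, distinct values $X^{(k)}_1,\dots,X^{(k)}_n$, let $\pi^{(k)}$ be the permutation with $X^{(k)}_{\pi^{(k)}(1)}<\dots<X^{(k)}_{\pi^{(k)}(n)}$. If $$\lambda\ge\max_{1\le k\le p,\ 1\le m\le n}\Big|\sum_{i=1}^m Y_{\pi^{(k)}(i)}\Big|,$$ then the zero fit $(\theta_1,\dots,\theta_p)=(0,\dots,0)$ is a minimiser of $L_\lambda$, and every single-covariate update of the LISO-backfitting procedure started at zero leaves the fit at zero.
   Context: Data $Y\in\mathbb{R}^n$ with $\sum_iY_i=0$, $X\in\mathbb{R}^{n\times p}$ with columns $X^{(k)}$. $\mathcal{F}_k$ is the set of $\theta_k\in\mathbb{R}^n$ with $\sum_i\theta_{k,i}=0$ and $\theta_{k,i}\le\theta_{k,j}$ whenever $X^{(k)}_i<X^{(k)}_j$. The LISO loss is $L_\lambda(\theta_1,\dots,\theta_p)=\tfrac12\|Y-\sum_k\theta_k\|^2+\lambda\sum_k(\max_i\theta_{k,i}-\min_i\theta_{k,i})$ over $\mathcal{F}_1\times\dots\times\mathcal{F}_p$. A single-covariate backfitting update replaces $\theta_k$ by the minimiser of $L_\lambda$ over $\theta_k\in\mathcal{F}_k$ with the other components fixed. *)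

theory Defs
  imports Complex_Main
begin

text \<open>Observations are indexed by i < n (0-based), covariates by k < p.
  A fit is theta :: nat => nat => real with theta k i = theta_{k,i}.
  X k i = X^{(k)}_i.\<close>

definition liso_F :: "nat \<Rightarrow> (nat \<Rightarrow> nat \<Rightarrow> real) \<Rightarrow> nat \<Rightarrow> (nat \<Rightarrow> real) set" where
  "liso_F n X k = {th. (\<Sum>i<n. th i) = 0 \<and>
      (\<forall>i<n. \<forall>j<n. X k i < X k j \<longrightarrow> th i \<le> th j)}"

definition liso_loss :: "nat \<Rightarrow> nat \<Rightarrow> (nat \<Rightarrow> real) \<Rightarrow> real \<Rightarrow> (nat \<Rightarrow> nat \<Rightarrow> real) \<Rightarrow> real" where
  "liso_loss n p Y lam theta =
     (1/2) * (\<Sum>i<n. (Y i - (\<Sum>k<p. theta k i))\<^sup>2)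
     + lam * (\<Sum>k<p. Max (theta k ` {..<n}) - Min (theta k ` {..<n}))"

definition liso_minimiser :: "nat \<Rightarrow> nat \<Rightarrow> (nat \<Rightarrow> real) \<Rightarrow> (nat \<Rightarrow> nat \<Rightarrow> real) \<Rightarrow> real \<Rightarrow> (nat \<Rightarrow> nat \<Rightarrow> real) \<Rightarrow> bool" where
  "liso_minimiser n p Y X lam theta \<longleftrightarrow>
     (\<forall>k<p. theta k \<in> liso_F n X k) \<and>
     (\<forall>theta'. (\<forall>k<p. theta' k \<in> liso_F n X k) \<longrightarrow>
        liso_loss n p Y lam theta \<le> liso_loss n p Y lam theta')"

definition liso_update :: "nat \<Rightarrow> nat \<Rightarrow> (nat \<Rightarrow> real) \<Rightarrow> (nat \<Rightarrow> nat \<Rightarrow> real) \<Rightarrow> real \<Rightarrow> (nat \<Rightarrow> nat \<Rightarrow> real) \<Rightarrow> nat \<Rightarrow> (nat \<Rightarrow> real) \<Rightarrow> bool" where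
  "liso_update n p Y X lam theta k th \<longleftrightarrow>
     th \<in> liso_F n X k \<and>
     (\<forall>th' \<in> liso_F n X k.
        liso_loss n p Y lam (theta(k := th)) \<le> liso_loss n p Y lam (theta(k := th')))"

end

theory Submission
  imports Defs
begin

lemma abel:
  fixes y a :: "nat \<Rightarrow> real"
  shows "(\<Sum>m<Suc N. y m * a m) = (\<Sum>i<Suc N. y i) * a N
           - (\<Sum>m<N. (\<Sum>i<Suc m. y i) * (a (Suc m) - a m))"
proof (induction N)
  case 0 then show ?case by simp
next
  case (Suc N)
  show ?case
    apply (subst sum.lessThan_Suc)
    apply (subst Suc)
    apply (simp only: sum.lessThan_Suc[of _ N] sum.lessThan_Suc[of _ "Suc N"])
    by (simp add: algebra_simps)
qed

lemma key:
  fixes y a :: "nat \<Rightarrow> real"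
  assumes "0 < n" "(\<Sum>i<n. y i) = 0"
    "\<forall>m\<in>{1..n}. \<bar>\<Sum>i<m. y i\<bar> \<le> lam"
    "\<forall>m. Suc m < n \<longrightarrow> a m \<le> a (Suc m)"
  shows "(\<Sum>m<n. y m * a m) \<le> lam * (a (n-1) - a 0)"
proof -
  obtain N where N: "n = Suc N" using assms(1) by (cases n) auto
  have "(\<Sum>m<n. y m * a m) = - (\<Sum>m<N. (\<Sum>i<Suc m. y i) * (a (Suc m) - a m))"
    using abel[of y a N] assms(2) N by simp
  also have "\<dots> \<le> (\<Sum>m<N. lam * (a (Suc m) - a m))"
  proof -
    have "(\<Sum>m<N. - ((\<Sum>i<Suc m. y i) * (a (Suc m) - a m))) \<le> (\<Sum>m<N. lam * (a (Suc m) - a m))"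
    proof (rule sum_mono)
      fix m assume "m \<in> {..<N}"
      then have d: "a (Suc m) - a m \<ge> 0" using assms(4) N by auto
      have b: "\<bar>\<Sum>i<Suc m. y i\<bar> \<le> lam"
        using assms(3) N \<open>m \<in> {..<N}\<close> by (simp del: sum.lessThan_Suc)
      have "- ((\<Sum>i<Suc m. y i) * (a (Suc m) - a m)) \<le> \<bar>\<Sum>i<Suc m. y i\<bar> * (a (Suc m) - a m)"
        using d by (metis abs_ge_minus_self abs_mult abs_of_nonneg abs_le_D1 minus_mult_left)
      also have "\<dots> \<le> lam * (a (Suc m) - a m)" using d b by (simp add: mult_right_mono)
      finally show "- ((\<Sum>i<Suc m. y i) * (a (Suc m) - a m)) \<le> lam * (a (Suc m) - a m)" .
    qed
    then show ?thesis by (simp add: sum_negf)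
  qed
  also have "\<dots> = lam * (a (n-1) - a 0)"
    by (simp add: N sum_distrib_left[symmetric] sum_lessThan_telescope)
  finally show ?thesis .
qed

theorem mainTheorem8:
  fixes n p :: nat and Y :: "nat \<Rightarrow> real" and X :: "nat \<Rightarrow> nat \<Rightarrow> real"
    and lam :: real and pi :: "nat \<Rightarrow> nat \<Rightarrow> nat"
  assumes n_pos: "0 < n"
    and Y_centred: "(\<Sum>i<n. Y i) = 0"
    and X_distinct: "\<forall>k<p. inj_on (X k) {..<n}"
    and pi_perm: "\<forall>k<p. bij_betw (pi k) {..<n} {..<n}"
    and pi_sorts: "\<forall>k<p. \<forall>i j. i < j \<and> j < n \<longrightarrow> X k (pi k i) < X k (pi k j)"
    and lam_ge: "\<forall>k<p. \<forall>m\<in>{1..n}. \<bar>\<Sum>i<m. Y (pi k i)\<bar> \<le> lam"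
  shows "liso_minimiser n p Y X lam (\<lambda>k i. 0) \<and>
         (\<forall>k<p. \<forall>th. liso_update n p Y X lam (\<lambda>k i. 0) k th \<longrightarrow> (\<forall>i<n. th i = 0))"
proof -
  have ne: "{..<n} \<noteq> {}" using n_pos by auto
  have inner: "(\<Sum>i<n. Y i * th i) \<le> lam * (Max (th ` {..<n}) - Min (th ` {..<n}))"
    if k: "k < p" and th: "th \<in> liso_F n X k" for k th
  proof -
    have "\<bar>\<Sum>i<1. Y (pi k i)\<bar> \<le> lam" using lam_ge k n_pos
      by (metis atLeastAtMost_iff le_refl less_one not_le)
    then have lamnn: "0 \<le> lam" by (rule order.trans[OF abs_ge_zero])
    have mono: "\<forall>i<n. \<forall>j<n. X k i < X k j \<longrightarrow> th i \<le> th j"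
      using th by (simp add: liso_F_def)
    have bij: "bij_betw (pi k) {..<n} {..<n}" using pi_perm k by auto
    have "(\<Sum>i<n. Y i * th i) = (\<Sum>m<n. Y (pi k m) * th (pi k m))"
      using sum.reindex_bij_betw[OF bij, of "\<lambda>i. Y i * th i"] by simp
    also have "\<dots> \<le> lam * (th (pi k (n-1)) - th (pi k 0))"
    proof (rule key[OF n_pos])
      show "(\<Sum>i<n. Y (pi k i)) = 0"
        using sum.reindex_bij_betw[OF bij, of Y] Y_centred by simp
      show "\<forall>m\<in>{1..n}. \<bar>\<Sum>i<m. Y (pi k i)\<bar> \<le> lam" using lam_ge k by auto
      show "\<forall>m. Suc m < n \<longrightarrow> th (pi k m) \<le> th (pi k (Suc m))"
      proof (intro allI impI)
        fix m assume m: "Suc m < n"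
        have "X k (pi k m) < X k (pi k (Suc m))" using pi_sorts k m by auto
        moreover have "pi k m < n" "pi k (Suc m) < n" using bij m
          by (auto simp: bij_betw_def)
        ultimately show "th (pi k m) \<le> th (pi k (Suc m))" using mono by auto
      qed
    qed
    also have "\<dots> \<le> lam * (Max (th ` {..<n}) - Min (th ` {..<n}))"
    proof -
      have "pi k (n-1) < n" "pi k 0 < n" using bij n_pos by (auto simp: bij_betw_def)
      then have "th (pi k (n-1)) \<le> Max (th ` {..<n})" "Min (th ` {..<n}) \<le> th (pi k 0)"
        by auto
      then show ?thesis using lamnn by (intro mult_left_mono) auto
    qed
    finally show ?thesis .
  qed
  have rng: "0 \<le> Max (th ` {..<n}) - Min (th ` {..<n})" for th :: "nat \<Rightarrow> real"
  proof -
    have "th 0 \<le> Max (th ` {..<n})" "Min (th ` {..<n}) \<le> th 0" using n_pos by auto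
    then show ?thesis by simp
  qed
  have img0: "(\<lambda>i. 0::real) ` {..<n} = {0}" using ne by auto
  have L0: "liso_loss n p Y lam (\<lambda>k i. 0) = (1/2) * (\<Sum>i<n. (Y i)\<^sup>2)"
    by (simp add: liso_loss_def img0)
  have expand: "(\<Sum>i<n. (Y i - t i)\<^sup>2) = (\<Sum>i<n. (Y i)\<^sup>2) - 2 * (\<Sum>i<n. Y i * t i) + (\<Sum>i<n. (t i)\<^sup>2)"
    for t :: "nat \<Rightarrow> real"
    by (simp add: power2_diff sum.distrib sum_subtractf sum_distrib_left algebra_simps)
  have part1: "liso_minimiser n p Y X lam (\<lambda>k i. 0)"
    unfolding liso_minimiser_def
  proof (intro conjI allI impI)
    fix k assume "k < p"
    show "(\<lambda>i. 0) \<in> liso_F n X k" by (simp add: liso_F_def)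
  next
    fix th' assume F: "\<forall>k<p. th' k \<in> liso_F n X k"
    define t where "t i = (\<Sum>k<p. th' k i)" for i
    have "(\<Sum>i<n. Y i * t i) = (\<Sum>k<p. \<Sum>i<n. Y i * th' k i)"
      unfolding t_def by (simp add: sum_distrib_left sum.swap[of _ "{..<n}"])
    also have "\<dots> \<le> (\<Sum>k<p. lam * (Max (th' k ` {..<n}) - Min (th' k ` {..<n})))"
      using inner F by (intro sum_mono) auto
    finally have A: "(\<Sum>i<n. Y i * t i) \<le> lam * (\<Sum>k<p. Max (th' k ` {..<n}) - Min (th' k ` {..<n}))"
      by (simp add: sum_distrib_left)
    have B: "0 \<le> (\<Sum>i<n. (t i)\<^sup>2)" by (simp add: sum_nonneg)
    have "liso_loss n p Y lam th' = (1/2) * ((\<Sum>i<n. (Y i)\<^sup>2) - 2 * (\<Sum>i<n. Y i * t i) + (\<Sum>i<n. (t i)\<^sup>2))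
       + lam * (\<Sum>k<p. Max (th' k ` {..<n}) - Min (th' k ` {..<n}))"
      unfolding liso_loss_def t_def[symmetric] expand ..
    then show "liso_loss n p Y lam (\<lambda>k i. 0) \<le> liso_loss n p Y lam th'"
      using A B L0 by (simp add: field_simps)
  qed
  have part2: "\<forall>i<n. th i = 0" if k: "k < p" and up: "liso_update n p Y X lam (\<lambda>k i. 0) k th" for k th
  proof -
    have thF: "th \<in> liso_F n X k" and le: "liso_loss n p Y lam ((\<lambda>k i. 0)(k := th)) \<le> liso_loss n p Y lam ((\<lambda>k i. 0)(k := (\<lambda>i. 0)))"
      using up by (auto simp: liso_update_def liso_F_def)
    have z: "((\<lambda>k i. 0::real)(k := (\<lambda>i. 0))) = (\<lambda>k i. 0)" by auto
    have sumk: "(\<Sum>k'<p. ((\<lambda>k i. 0::real)(k := th)) k' i) = th i" for i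
    proof -
      have "(\<Sum>k'<p. ((\<lambda>k i. 0::real)(k := th)) k' i) = (\<Sum>k'<p. if k' = k then th i else 0)"
        by (rule sum.cong) auto
      then show ?thesis using k by simp
    qed
    have sumr: "(\<Sum>k'<p. Max (((\<lambda>k i. 0::real)(k := th)) k' ` {..<n}) - Min (((\<lambda>k i. 0::real)(k := th)) k' ` {..<n}))
        = Max (th ` {..<n}) - Min (th ` {..<n})"
    proof -
      have "(\<Sum>k'<p. Max (((\<lambda>k i. 0::real)(k := th)) k' ` {..<n}) - Min (((\<lambda>k i. 0::real)(k := th)) k' ` {..<n}))
          = (\<Sum>k'<p. if k' = k then Max (th ` {..<n}) - Min (th ` {..<n}) else 0)"
        by (rule sum.cong) (auto simp: img0)
      then show ?thesis using k by simp
    qed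
    have Lth: "liso_loss n p Y lam ((\<lambda>k i. 0)(k := th)) =
       (1/2) * ((\<Sum>i<n. (Y i)\<^sup>2) - 2 * (\<Sum>i<n. Y i * th i) + (\<Sum>i<n. (th i)\<^sup>2))
       + lam * (Max (th ` {..<n}) - Min (th ` {..<n}))"
      unfolding liso_loss_def sumk sumr expand ..
    have "(\<Sum>i<n. (th i)\<^sup>2) \<le> 0"
      using le[unfolded z] Lth L0 inner[OF k thF] by (simp add: field_simps)
    then have "\<forall>i\<in>{..<n}. (th i)\<^sup>2 = 0"
    proof -
      have "0 \<le> (\<Sum>i<n. (th i)\<^sup>2)" by (rule sum_nonneg) simp
      with \<open>(\<Sum>i<n. (th i)\<^sup>2) \<le> 0\<close> have "(\<Sum>i<n. (th i)\<^sup>2) = 0" by linarith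
      then show ?thesis by (subst (asm) sum_nonneg_eq_0_iff) auto
    qed
    then show ?thesis by simp
  qed
  show ?thesis using part1 part2 by blast
qed

end
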